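(* For every odd integer $\ell\ge 17$ there exists a palindrome of length $\ell$ over a ternary alphabet whose critical exponent is exactly $\tfrac{7}{4}$.
   Context: A word $x=x[1..n]$ has period $q$ if $x[i]=x[i+q]$ for $1\le i\le n-q$. For integers $p>q\ge1$, $x$ is a $(p/q)$-power if it has length $p$ and period $q$. The exponent $\exp(w)$ of a finite nonempty word $w$ is the largest rational $p/q$ such that $w$ is a $(p/q)$-power. The critical exponent of $w$ is the maximum of $\exp(w')$ over all nonempty factors $w'$ of $w$. A palindrome is a word equal to its reversal. *)

theory Defs
  imports Complex_Main "HOL-Library.Sublist"
begin

definition has_period :: "'a list \<Rightarrow> nat \<Rightarrow> bool" where
  "has_period x q \<longleftrightarrow> 1 \<le> q \<and> (\<forall>i. i + q < length x \<longrightarrow> x ! i = x ! (i + q))"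

definition word_exp :: "'a list \<Rightarrow> rat" where
  "word_exp w = Max {of_nat (length w) / of_nat q | q. has_period w q \<and> q \<le> length w}"

definition critical_exponent :: "'a list \<Rightarrow> rat" where
  "critical_exponent w = Max {word_exp u | u. sublist u w \<and> u \<noteq> []}"

definition palindrome :: "'a list \<Rightarrow> bool" where
  "palindrome w \<longleftrightarrow> rev w = w"

end

theory Submission
  imports Defs
begin

definition D0 :: "nat list" where "D0 = [0,1,2,0,2,1,2,0,1,2,1,0,2,1,2,0,2,1,0]"

definition Dm :: "nat list \<Rightarrow> nat list" where
  "Dm w = map (\<lambda>j. (D0 ! (j mod 19) + w ! (j div 19)) mod 3) [0..<19 * length w]"

lemma Dm_len[simp]: "length (Dm w) = 19 * length w" by (simp add: Dm_def)

lemma Dm_nth: "j < 19 * length w \<Longrightarrow> Dm w ! j = (D0 ! (j mod 19) + w ! (j div 19)) mod 3"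
  by (simp add: Dm_def)

lemma Dm_set: "set (Dm w) \<subseteq> {..<3}" by (auto simp: Dm_def)

definition rep :: "nat list \<Rightarrow> nat \<Rightarrow> nat \<Rightarrow> nat \<Rightarrow> bool" where
  "rep w i p L \<longleftrightarrow> 1 \<le> p \<and> 7*p < 4*L \<and> i + L \<le> length w \<and> (\<forall>k. k + p < L \<longrightarrow> w!(i+k) = w!(i+k+p))"

definition free :: "nat list \<Rightarrow> bool" where "free w \<longleftrightarrow> (\<forall>i p L. \<not> rep w i p L)"

definition f :: "nat \<Rightarrow> nat \<Rightarrow> nat \<Rightarrow> nat \<Rightarrow> nat" where
  "f a b x k = (D0 ! ((x+k) mod 19) + (if x + k < 19 then a else b)) mod 3"

definition L1 :: "(nat list \<times> nat) list" where
 "L1 = [(map (f a b x) [0..<10], x). a \<leftarrow> [0..<3], b \<leftarrow> [0..<3], a \<noteq> b, x \<leftarrow> [0..<19]]"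

lemma c1: "distinct (map fst (remdups L1))" by code_simp

definition chk2 :: bool where "chk2 = (\<forall>a\<in>set [0..<3]. \<forall>b\<in>set [0..<3]. a \<noteq> b \<longrightarrow>
   (\<forall>x\<in>set [0..<19]. \<forall>p\<in>set [1..<12]. \<not> (\<forall>k\<in>set [0..<7*p div 4 + 1 - p]. f a b x k = f a b x (k+p))))"

lemma c2: chk2 by code_simp

lemma c2': "a < 3 \<Longrightarrow> b < 3 \<Longrightarrow> a \<noteq> b \<Longrightarrow> x < 19 \<Longrightarrow> 1 \<le> p \<Longrightarrow> p < 12 \<Longrightarrow>
   \<forall>k. k < 7*p div 4 + 1 - p \<longrightarrow> f a b x k = f a b x (k+p) \<Longrightarrow> False"
proof -
  assume as: "a < 3" "b < 3" "a \<noteq> b" "x < 19" "1 \<le> p" "p < 12"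
    "\<forall>k. k < 7*p div 4 + 1 - p \<longrightarrow> f a b x k = f a b x (k+p)"
  have H: "\<And>a b x p. a \<in> set [0..<3] \<Longrightarrow> b \<in> set [0..<3] \<Longrightarrow> a \<noteq> b \<Longrightarrow> x \<in> set [0..<19]
     \<Longrightarrow> p \<in> set [1..<12] \<Longrightarrow> \<not> (\<forall>k\<in>set [0..<7*p div 4 + 1 - p]. f a b x k = f a b x (k+p))"
    using c2 unfolding chk2_def by blast
  have m: "a \<in> set [0..<3]" "b \<in> set [0..<3]" "x \<in> set [0..<19]" "p \<in> set [1..<12]"
    using as by (simp_all only: set_upt atLeastLessThan_iff) auto
  have "\<forall>k\<in>set [0..<7*p div 4 + 1 - p]. f a b x k = f a b x (k+p)"
  proof
    fix k assume "k \<in> set [0..<7*p div 4 + 1 - p]"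
    then have "k < 7*p div 4 + 1 - p" by (simp only: set_upt atLeastLessThan_iff)
    then show "f a b x k = f a b x (k+p)" using as(7) by blast
  qed
  then show False using H[OF m(1,2) as(3) m(3,4)] by blast
qed

lemma rep_shrink: assumes "rep w i p L" shows "rep w i p (7*p div 4 + 1)"
proof -
  have a: "7*p div 4 * 4 + 7*p mod 4 = 7*p" by simp
  have b: "7*p mod 4 < 4" by simp
  from assms a b have "7*p div 4 + 1 \<le> L" unfolding rep_def by linarith
  moreover have "7 * p < 4 * (7*p div 4 + 1)" by presburger
  ultimately have "7*p div 4 + 1 \<le> L" "7 * p < 4 * (7*p div 4 + 1)" by auto
  with assms show ?thesis unfolding rep_def by auto
qed

lemma dm19: "(y::nat) < 19 \<Longrightarrow> (y + 19 * z) mod 19 = y" "(y::nat) < 19 \<Longrightarrow> (y + 19 * z) div 19 = z"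
  by simp_all

lemma window:
  assumes fr: "free w" and st: "set w \<subseteq> {..<3}" and len: "j + n \<le> 19 * length w" and n20: "n \<le> 20"
  shows "\<exists>a b. a < 3 \<and> b < 3 \<and> a \<noteq> b \<and> (\<forall>k<n. Dm w ! (j+k) = f a b (j mod 19) k)"
proof (cases "n = 0")
  case True then show ?thesis by (intro exI[of _ 0] exI[of _ 1]) auto
next
  case False
  define s where "s = j div 19"
  define x where "x = j mod 19"
  have jx: "j = 19 * s + x" "x < 19" unfolding s_def x_def by auto
  have sl: "s < length w" using len False jx by linarith
  define a where "a = w ! s"
  define b where "b = (if Suc s < length w then w ! Suc s else (a + 1) mod 3)"
  have a3: "a < 3" using st sl unfolding a_def by (auto dest: nth_mem)
  have b3: "b < 3" using st unfolding b_def by (auto dest: nth_mem)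
  have ab: "a \<noteq> b"
  proof (cases "Suc s < length w")
    case True
    have "\<not> rep w s 1 2" using fr unfolding free_def by blast
    then have "w ! s \<noteq> w ! Suc s" using True unfolding rep_def by auto
    then show ?thesis using True unfolding a_def b_def by simp
  next
    case False then show ?thesis unfolding b_def using a3 by simp presburger
  qed
  have "\<forall>k<n. Dm w ! (j+k) = f a b x k"
  proof (intro allI impI)
    fix k assume k: "k < n"
    have jk: "j + k < 19 * length w" using k len by linarith
    show "Dm w ! (j+k) = f a b x k"
    proof (cases "x + k < 19")
      case True
      have e0: "j + k = 19 * s + (x + k)" using jx by simp
      have "(j+k) mod 19 = x + k" "(j+k) div 19 = s" unfolding e0 using True by auto
      then show ?thesis using Dm_nth[OF jk] True unfolding f_def a_def by simp
    next
      case False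
      have e: "j + k = (x + k - 19) + 19 * (Suc s)" "x + k - 19 < 19" using jx False k n20 by auto
      have "(j+k) mod 19 = x + k - 19" unfolding e(1) by (rule dm19(1)[OF e(2)])
      moreover have "(j+k) div 19 = Suc s" unfolding e(1) by (rule dm19(2)[OF e(2)])
      moreover have "(x+k) mod 19 = x + k - 19" using False e(2) by (simp add: mod_if)
      moreover have "19 * Suc s < 19 * length w" using jk e by linarith
      then have "Suc s < length w" by simp
      ultimately show ?thesis using Dm_nth[OF jk] False unfolding f_def b_def by simp
    qed
  qed
  then show ?thesis using a3 b3 ab unfolding x_def by blast
qed

lemma distinct_fst: "distinct (map fst xs) \<Longrightarrow> (k,u) \<in> set xs \<Longrightarrow> (k,v) \<in> set xs \<Longrightarrow> u = v"
  by (metis distinct_map fst_conv inj_on_contraD prod.inject)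

lemma inL1: "a < 3 \<Longrightarrow> b < 3 \<Longrightarrow> a \<noteq> b \<Longrightarrow> x < 19 \<Longrightarrow> (map (f a b x) [0..<10], x) \<in> set L1"
  unfolding L1_def apply simp apply (rule bexI[of _ a]) apply (rule bexI[of _ b]) by auto

lemma sync:
  assumes fr: "free w" and st: "set w \<subseteq> {..<3}" and l1: "j + 10 \<le> 19 * length w"
    and l2: "j' + 10 \<le> 19 * length w" and eq: "\<forall>k<10. Dm w ! (j+k) = Dm w ! (j'+k)"
  shows "j mod 19 = j' mod 19"
proof -
  obtain a b where ab: "a < 3" "b < 3" "a \<noteq> b" "\<forall>k<10. Dm w ! (j+k) = f a b (j mod 19) k"
    using window[OF fr st l1] by auto
  obtain c d where cd: "c < 3" "d < 3" "c \<noteq> d" "\<forall>k<10. Dm w ! (j'+k) = f c d (j' mod 19) k"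
    using window[OF fr st l2] by auto
  have M: "map (f a b (j mod 19)) [0..<10] = map (f c d (j' mod 19)) [0..<10]"
    using ab(4) cd(4) eq by (intro map_cong) auto
  have "(map (f a b (j mod 19)) [0..<10], j' mod 19) \<in> set (remdups L1)"
    by (subst M) (simp add: inL1 cd)
  moreover have "(map (f a b (j mod 19)) [0..<10], j mod 19) \<in> set (remdups L1)"
    using inL1[OF ab(1-3), of "j mod 19"] by simp
  ultimately show ?thesis using distinct_fst[OF c1] by metis
qed

lemma mod3_cancel: "(a::nat) < 3 \<Longrightarrow> b < 3 \<Longrightarrow> (x + a) mod 3 = (x + b) mod 3 \<Longrightarrow> a = b"
  by presburger

lemma pullback:
  assumes st: "set w \<subseteq> {..<3}" and r: "rep (Dm w) i (19*P) L"
  shows "\<exists>s n. rep w s P n"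
proof -
  define p where "p = 19 * P"
  have r1: "1 \<le> p" "7*p < 4*L" "i + L \<le> 19 * length w"
    and r2: "\<And>k. k + p < L \<Longrightarrow> Dm w ! (i+k) = Dm w ! (i+k+p)"
    using r unfolding rep_def p_def by auto
  have P1: "1 \<le> P" using r1 p_def by simp
  have Lp: "p < L" using r1 by linarith
  obtain M where M: "M + p + 1 = i + L" using Lp by (metis add.commute add_Suc_right less_imp_Suc_add add.assoc plus_1_eq_Suc)
  have iM: "i \<le> M" using M Lp by linarith
  define s where "s = i div 19"
  define e where "e = M div 19"
  have f1: "19 * s \<le> i" "i < 19 * s + 19" unfolding s_def by auto
  have f2: "19 * e \<le> M" "M < 19 * e + 19" unfolding e_def by auto
  have se: "s \<le> e" unfolding s_def e_def using iM by (rule div_le_mono)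
  obtain d where d: "e = s + d" using se le_Suc_ex by blast
  define n where "n = d + 1 + P"
  have n19: "19 * n = 19 * d + 19 + 19 * P" unfolding n_def by simp
  have "L \<le> 19 * n" using f1 f2 d M n19 unfolding p_def by linarith
  then have A: "7 * P < 4 * n" using r1 unfolding p_def by linarith
  have "19 * e + 19 * P < 19 * length w" using f2 M r1 unfolding p_def by linarith
  then have "19 * (e + P) < 19 * length w" by (simp add: algebra_simps)
  then have "e + P < length w" by simp
  then have B: "s + n \<le> length w" using d unfolding n_def by linarith
  have C: "\<forall>k. k + P < n \<longrightarrow> w!(s+k) = w!(s+k+P)"
  proof (intro allI impI)
    fix k assume kn: "k + P < n"
    then have ke: "s + k \<le> e" unfolding n_def using d by linarith
    define j where "j = max i (19 * (s+k))"
    have j1: "i \<le> j" "j \<le> M"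
    proof -
      have "19 * (s+k) \<le> 19 * e" using ke by simp
      then show "i \<le> j" "j \<le> M" unfolding j_def using f2 iM by auto
    qed
    have jd: "j div 19 = s + k"
    proof (cases "19 * (s+k) \<le> i")
      case True
      then have "19 * s + 19 * k \<le> i" by (simp add: algebra_simps)
      then have "19 * k < 19" using f1 by linarith
      then have "k = 0" by simp
      then show ?thesis using True unfolding j_def s_def by auto
    next
      case False then show ?thesis unfolding j_def by auto
    qed
    have jp: "j + p < i + L" using j1 M by linarith
    have jl: "j + p < 19 * length w" using jp r1 by linarith
    have jl': "j < 19 * length w" using jl by linarith
    have "Dm w ! (i + (j - i)) = Dm w ! (i + (j - i) + p)"
      by (rule r2) (use j1 jp in linarith)
    then have "Dm w ! j = Dm w ! (j + p)" using j1 by simp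
    moreover have "(j + p) mod 19 = j mod 19" "(j+p) div 19 = s + k + P"
      using jd unfolding p_def by auto
    ultimately have "(D0 ! (j mod 19) + w ! (s+k)) mod 3 = (D0 ! (j mod 19) + w ! (s+k+P)) mod 3"
      using Dm_nth[OF jl] Dm_nth[OF jl'] jd by simp
    moreover have l1: "s + k < length w" and l2: "s + k + P < length w" using B kn by linarith+
    moreover have "w ! (s+k) < 3" using st nth_mem[OF l1] by auto
    moreover have "w ! (s+k+P) < 3" using st nth_mem[OF l2] by auto
    ultimately show "w!(s+k) = w!(s+k+P)" using mod3_cancel by blast
  qed
  show ?thesis using A B C P1 unfolding rep_def by blast
qed

lemma Dm_free: assumes fr: "free w" and st: "set w \<subseteq> {..<3}" shows "free (Dm w)"
  unfolding free_def
proof (intro allI notI)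
  fix i p L assume "rep (Dm w) i p L"
  define L' where "L' = 7*p div 4 + 1"
  have R: "rep (Dm w) i p L'" using rep_shrink[OF \<open>rep (Dm w) i p L\<close>] unfolding L'_def .
  then have r1: "1 \<le> p" "7*p < 4*L'" "i + L' \<le> 19 * length w"
    and r2: "\<And>k. k + p < L' \<Longrightarrow> Dm w ! (i+k) = Dm w ! (i+k+p)"
    unfolding rep_def by auto
  show False
  proof (cases "p + 10 \<le> L'")
    case True
    have E: "\<forall>k<10. Dm w ! (i+k) = Dm w ! ((i+p)+k)"
    proof (intro allI impI)
      fix k :: nat assume "k < 10"
      then have "k + p < L'" using True by linarith
      then have "Dm w ! (i+k) = Dm w ! (i+k+p)" by (rule r2)
      moreover have "i + k + p = (i + p) + k" by simp
      ultimately show "Dm w ! (i+k) = Dm w ! ((i+p)+k)" by simp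
    qed
    have "i mod 19 = (i + p) mod 19"
      by (rule sync[OF fr st _ _ E]) (use True r1 in linarith)+
    then have "19 dvd (i + p) - i" using mod_eq_dvd_iff_nat[of i "i+p" 19] by simp
    then have "19 dvd p" by simp
    then obtain P where "p = 19 * P" by (auto elim: dvdE)
    then obtain s n where "rep w s P n" using pullback[OF st] R by blast
    then show False using fr unfolding free_def by blast
  next
    case False
    then have p12: "p < 12" using r1(2) by linarith
    have L20: "L' \<le> 20" using p12 False by linarith
    obtain a b where ab: "a < 3" "b < 3" "a \<noteq> b" "\<forall>k<L'. Dm w ! (i+k) = f a b (i mod 19) k"
      using window[OF fr st r1(3) L20] by auto
    have "\<forall>k. k < 7*p div 4 + 1 - p \<longrightarrow> f a b (i mod 19) k = f a b (i mod 19) (k+p)"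
    proof (intro allI impI)
      fix k assume "k < 7*p div 4 + 1 - p"
      then have k: "k + p < L'" unfolding L'_def by linarith
      have "Dm w ! (i+k) = Dm w ! (i+(k+p))" using r2[OF k] by (simp add: add.assoc)
      then show "f a b (i mod 19) k = f a b (i mod 19) (k+p)" using ab(4) k by auto
    qed
    then show False using c2'[OF ab(1-3), of "i mod 19"] r1(1) p12 by auto
  qed
qed


lemma D0_sym0: "\<forall>x\<in>set [0..<19]. D0 ! (18 - x) = D0 ! x" by code_simp
lemma D0_sym: "x < 19 \<Longrightarrow> D0 ! (18 - x) = D0 ! x" using D0_sym0 by simp

lemma Dm_rev: "rev (Dm w) = Dm (rev w)"
proof (rule nth_equalityI)
  show "length (rev (Dm w)) = length (Dm (rev w))" by simp
next
  fix j assume "j < length (rev (Dm w))"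
  then have j: "j < 19 * length w" by simp
  define a where "a = j div 19"
  define x where "x = j mod 19"
  have jx: "j = x + 19 * a" "x < 19" unfolding a_def x_def by auto
  have al: "a < length w" using j jx by linarith
  have e: "19 * length w - Suc j = (18 - x) + 19 * (length w - Suc a)" using jx al by auto
  have m1: "(19 * length w - Suc j) mod 19 = 18 - x" unfolding e by (rule dm19(1)) simp
  have m2: "(19 * length w - Suc j) div 19 = length w - Suc a" unfolding e by (rule dm19(2)) simp
  have "rev (Dm w) ! j = Dm w ! (19 * length w - Suc j)" using j by (simp add: rev_nth)
  also have "\<dots> = (D0 ! (18 - x) + w ! (length w - Suc a)) mod 3"
    using j by (subst Dm_nth) (auto simp: m1 m2)
  also have "\<dots> = (D0 ! x + rev w ! a) mod 3" using D0_sym[OF jx(2)] al by (simp add: rev_nth)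
  also have "\<dots> = Dm (rev w) ! j" using j by (subst Dm_nth) (auto simp: a_def x_def)
  finally show "rev (Dm w) ! j = Dm (rev w) ! j" .
qed

definition W :: "nat \<Rightarrow> nat list" where "W k = (Dm ^^ k) [0]"

lemma W_Suc: "W (Suc k) = Dm (W k)" by (simp add: W_def)

lemma W_len: "length (W k) = 19 ^ k" by (induction k) (auto simp: W_def)

lemma W_set: "set (W k) \<subseteq> {..<3}"
proof (cases k)
  case (Suc n) then show ?thesis using Dm_set[of "W n"] by (simp add: W_Suc)
qed (simp add: W_def)

lemma W_rev: "rev (W k) = W k" by (induction k) (auto simp: W_Suc Dm_rev W_def)

lemma free0: "free [0]" unfolding free_def rep_def by auto

lemma W_free: "free (W k)"
proof (induction k)
  case (Suc k) then show ?case using Dm_free W_set by (simp add: W_Suc)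
qed (simp add: W_def free0)

lemma rep_sublist: "rep u i p L \<Longrightarrow> sublist u w \<Longrightarrow> \<exists>i'. rep w i' p L"
proof -
  assume r: "rep u i p L" and "sublist u w"
  then obtain ps ss where w: "w = ps @ u @ ss" unfolding sublist_def by blast
  have wn: "\<And>t. t < length u \<Longrightarrow> w ! (length ps + t) = u ! t"
    unfolding w by (simp add: nth_append_length_plus nth_append)
  have r1: "1 \<le> p" "7*p < 4*L" "i + L \<le> length u" and r2: "\<And>k. k + p < L \<Longrightarrow> u!(i+k) = u!(i+k+p)"
    using r unfolding rep_def by auto
  have "rep w (length ps + i) p L" unfolding rep_def
  proof (intro conjI allI impI)
    show "length ps + i + L \<le> length w" using r1 unfolding w by simp
    fix k assume k: "k + p < L"
    have "w ! (length ps + i + k) = u ! (i + k)" using wn[of "i+k"] k r1 by (simp add: add.assoc)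
    moreover have "w ! (length ps + i + k + p) = u ! (i + k + p)" using wn[of "i+k+p"] k r1 by (simp add: add.assoc)
    ultimately show "w ! (length ps + i + k) = w ! (length ps + i + k + p)" using r2[OF k] by simp
  qed (use r1 in auto)
  then show ?thesis by blast
qed

lemma fin_exp: "finite {of_nat (length w) / of_nat q :: rat | q. has_period w q \<and> q \<le> length w}"
  by (rule finite_image_set) (rule finite_subset[of _ "{..length w}"], auto)

lemma free_exp: assumes fr: "free w" and sub: "sublist u w" and ne: "u \<noteq> []"
  shows "word_exp u \<le> 7/4"
  unfolding word_exp_def
proof (subst Max_le_iff)
  show "finite {of_nat (length u) / of_nat q :: rat | q. has_period u q \<and> q \<le> length u}" by (rule fin_exp)
  show "{of_nat (length u) / of_nat q :: rat | q. has_period u q \<and> q \<le> length u} \<noteq> {}"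
    using ne by (auto simp: has_period_def Suc_le_eq intro!: exI[of _ "length u"])
  show "\<forall>a\<in>{of_nat (length u) / of_nat q :: rat | q. has_period u q \<and> q \<le> length u}. a \<le> 7/4"
  proof (clarify)
    fix q assume hp: "has_period u q" and "q \<le> length u"
    show "of_nat (length u) / of_nat q \<le> (7/4::rat)"
    proof (rule ccontr)
      assume "\<not> of_nat (length u) / of_nat q \<le> (7/4::rat)"
      then have "(7/4::rat) < of_nat (length u) / of_nat q" by simp
      moreover have q1: "1 \<le> q" using hp unfolding has_period_def by simp
      ultimately have "(7/4::rat) * of_nat q < of_nat (length u)" by (simp add: less_divide_eq)
      then have "of_nat (7 * q) < (of_nat (4 * length u) :: rat)" by simp
      then have "7 * q < 4 * length u" by (simp only: of_nat_less_iff)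
      then have "rep u 0 q (length u)" using hp q1 unfolding rep_def has_period_def by auto
      then show False using rep_sublist[OF _ sub] fr unfolding free_def by blast
    qed
  qed
qed

lemma pow_ge: "2 * m + 1 \<le> (19::nat) ^ Suc m"
proof -
  have "m < 2 ^ m" by (rule less_exp)
  also have "(2::nat) ^ m \<le> 19 ^ m" by (rule power_mono) auto
  finally show ?thesis by simp
qed

theorem mainTheorem5:
  fixes l :: nat
  assumes "odd l" and "l \<ge> 17"
  shows "\<exists>w :: nat list. length w = l \<and> set w \<subseteq> {0, 1, 2} \<and> palindrome w
           \<and> critical_exponent w = 7 / 4"
proof -
  obtain m where lm: "l = 2 * m + 1" using assms(1) by (auto elim: oddE)
  have m8: "m \<ge> 8" using assms(2) lm by linarith
  define c :: nat where "c = (19 ^ m - 1) div 2"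
  have oddp: "odd ((19::nat) ^ m)" by simp
  have c2: "19 ^ m = 2 * c + 1" unfolding c_def using oddp by (auto elim: oddE)
  define C where "C = 19 * c + 9"
  define X where "X = W (Suc m)"
  have XD: "X = Dm (W m)" unfolding X_def W_Suc ..
  have Xl: "length X = 2 * C + 1" unfolding X_def W_len C_def using c2 by simp
  have mC: "m \<le> C" using pow_ge[of m] Xl unfolding X_def W_len by linarith
  define w where "w = take l (drop (C - m) X)"
  have wl: "length w = l" unfolding w_def using Xl mC lm by auto
  have wn: "\<And>k. k < l \<Longrightarrow> w ! k = X ! (C - m + k)" unfolding w_def using Xl mC lm by auto
  have Xset: "set X \<subseteq> {..<3}" unfolding X_def by (rule W_set)
  have wset: "set w \<subseteq> {0,1,2}"
  proof -
    have "set w \<subseteq> set X" unfolding w_def by (meson order_trans set_drop_subset set_take_subset)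
    with Xset show ?thesis by auto
  qed
  have pal: "palindrome w" unfolding palindrome_def
  proof (rule nth_equalityI)
    show "length (rev w) = length w" by simp
  next
    fix k assume "k < length (rev w)"
    then have k: "k < l" using wl by simp
    have "rev w ! k = w ! (l - Suc k)" using k wl by (simp add: rev_nth)
    also have "\<dots> = X ! (C + m - k)" using wn[of "l - Suc k"] k lm mC by (simp add: algebra_simps)
    also have "\<dots> = rev X ! (C - m + k)" using Xl k lm mC by (simp add: rev_nth)
    also have "\<dots> = X ! (C - m + k)" unfolding X_def W_rev ..
    also have "\<dots> = w ! k" using wn[OF k] ..
    finally show "rev w ! k = w ! k" .
  qed
  have Xfree: "free X" unfolding X_def by (rule W_free)
  have wsub: "sublist w X" unfolding sublist_def w_def
    by (rule exI[of _ "take (C-m) X"], rule exI[of _ "drop l (drop (C-m) X)"]) (simp only: append_take_drop_id)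
  have wfree: "free w" unfolding free_def
  proof (intro allI notI)
    fix i p L assume "rep w i p L"
    then obtain i' where "rep X i' p L" using rep_sublist[OF _ wsub] by blast
    then show False using Xfree unfolding free_def by blast
  qed
  define u where "u = take 7 (drop (m - 8) w)"
  have usub: "sublist u w" unfolding sublist_def u_def
    by (rule exI[of _ "take (m-8) w"], rule exI[of _ "drop 7 (drop (m-8) w)"]) (simp only: append_take_drop_id)
  have ul: "length u = 7" unfolding u_def using wl lm m8 by auto
  have un: "\<And>i. i < 7 \<Longrightarrow> u ! i = (D0 ! (1 + i) + W m ! c) mod 3"
  proof -
    fix i :: nat assume i: "i < 7"
    have "u ! i = w ! (m - 8 + i)" unfolding u_def using i wl lm m8 by auto
    also have "\<dots> = X ! (19 * c + (1 + i))" using wn[of "m - 8 + i"] i lm m8 mC unfolding C_def by auto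
    also have "\<dots> = (D0 ! (1 + i) + W m ! c) mod 3" unfolding XD
    proof (subst Dm_nth)
      show "19 * c + (1 + i) < 19 * length (W m)" using W_len[of m] c2 i by simp
      have "(19 * c + (1 + i)) mod 19 = 1 + i" "(19 * c + (1 + i)) div 19 = c" using i by auto
      then show "(D0 ! ((19 * c + (1 + i)) mod 19) + W m ! ((19 * c + (1 + i)) div 19)) mod 3 =
          (D0 ! (1 + i) + W m ! c) mod 3" by simp
    qed
    finally show "u ! i = (D0 ! (1 + i) + W m ! c) mod 3" .
  qed
  have hp: "has_period u 4" unfolding has_period_def
  proof (intro conjI allI impI)
    fix i assume "i + 4 < length u"
    then have i: "i < 3" using ul by simp
    have "\<forall>i\<in>set [0..<3]. D0 ! (1 + i) = D0 ! (1 + (i + 4))" by code_simp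
    then have "D0 ! (1 + i) = D0 ! (1 + (i + 4))" using i by simp
    then show "u ! i = u ! (i + 4)" using un[of i] un[of "i+4"] i by simp
  qed simp
  have uexp: "word_exp u = 7/4"
    unfolding word_exp_def
  proof (rule Max_eqI)
    show "finite {of_nat (length u) / of_nat q :: rat | q. has_period u q \<and> q \<le> length u}" by (rule fin_exp)
    show "(7/4::rat) \<in> {of_nat (length u) / of_nat q :: rat | q. has_period u q \<and> q \<le> length u}"
      using hp ul by (auto intro!: exI[of _ 4])
    fix y assume "y \<in> {of_nat (length u) / of_nat q :: rat | q. has_period u q \<and> q \<le> length u}"
    then have "y \<le> word_exp u" unfolding word_exp_def using fin_exp by (rule Max_ge[rotated])
    also have "word_exp u \<le> 7/4" using free_exp[OF wfree usub] ul by (cases u) auto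
    finally show "y \<le> 7/4" .
  qed
  have ce: "critical_exponent w = 7/4"
    unfolding critical_exponent_def
  proof (rule Max_eqI)
    have "finite {u. sublist u w \<and> u \<noteq> []}"
      by (rule finite_subset[of _ "set (sublists w)"]) auto
    then show "finite {word_exp u | u. sublist u w \<and> u \<noteq> []}" by (rule finite_image_set)
    show "(7/4::rat) \<in> {word_exp u | u. sublist u w \<and> u \<noteq> []}"
      using uexp usub ul by (auto intro!: exI[of _ u])
    fix y assume "y \<in> {word_exp u | u. sublist u w \<and> u \<noteq> []}"
    then show "y \<le> 7/4" using free_exp[OF wfree] by auto
  qed
  show ?thesis using wl wset pal ce by blast
qed

end
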